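(* Let $f$ be a periodic traveling wave (librational or rotational, of speed $c$ with $c^2\ne 1$). Then $\sigma(\mathrm{P})=\sigma(\mathrm{P})^*=-\sigma(\mathrm{P})=-\sigma(\mathrm{P})^*$, where $S^*=\{\bar\lambda:\lambda\in S\}$ and $-S=\{-\lambda:\lambda\in S\}$.
   Context: A traveling wave of speed $c$ ($c^2\neq1$) of $u_{tt}-u_{xx}+\sin u=0$ is a real solution $f$ of $(c^2-1)f''+\sin f=0$, with energy $E$ defined by $\tfrac12(c^2-1)(f')^2+1-\cos f=E$. Periodic traveling waves are the librational ones ($0<E<2$) and rotational ones ($E<0$ if $c^2<1$, $E>2$ if $c^2>1$). Set $\gamma=1/(c^2-1)$. $\sigma(\mathrm{P})$ is the set of $\lambda\in\mathbb{C}$ for which $p''-2c\gamma\lambda p'+\gamma(\lambda^2+\cos f(z))p=0$ has a nontrivial solution bounded on $\mathbb{R}$. *)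

theory Defs
  imports "HOL-Analysis.Analysis"
begin

definition traveling_wave :: "real \<Rightarrow> (real \<Rightarrow> real) \<Rightarrow> bool" where
  "traveling_wave c f \<longleftrightarrow> c\<^sup>2 \<noteq> 1 \<and>
     (\<exists>f1 f2. \<forall>z. (f has_real_derivative f1 z) (at z) \<and>
                  (f1 has_real_derivative f2 z) (at z) \<and>
                  (c\<^sup>2 - 1) * f2 z + sin (f z) = 0)"

text \<open>Energy E = (1/2)(c^2-1)(f')^2 + 1 - cos f (constant along solutions; evaluated at z = 0).\<close>
definition tw_energy :: "real \<Rightarrow> (real \<Rightarrow> real) \<Rightarrow> real" where
  "tw_energy c f = (c\<^sup>2 - 1) / 2 * (deriv f 0)\<^sup>2 + 1 - cos (f 0)"

definition librational_tw :: "real \<Rightarrow> (real \<Rightarrow> real) \<Rightarrow> bool" where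
  "librational_tw c f \<longleftrightarrow> traveling_wave c f \<and> 0 < tw_energy c f \<and> tw_energy c f < 2"

definition rotational_tw :: "real \<Rightarrow> (real \<Rightarrow> real) \<Rightarrow> bool" where
  "rotational_tw c f \<longleftrightarrow> traveling_wave c f \<and>
     ((c\<^sup>2 < 1 \<and> tw_energy c f < 0) \<or> (c\<^sup>2 > 1 \<and> tw_energy c f > 2))"

definition periodic_tw :: "real \<Rightarrow> (real \<Rightarrow> real) \<Rightarrow> bool" where
  "periodic_tw c f \<longleftrightarrow> librational_tw c f \<or> rotational_tw c f"

definition specP :: "real \<Rightarrow> (real \<Rightarrow> real) \<Rightarrow> complex set" where
  "specP c f = {l. \<exists>p p1 p2 :: real \<Rightarrow> complex.
      (\<forall>z. (p has_vector_derivative p1 z) (at z) \<and>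
           (p1 has_vector_derivative p2 z) (at z) \<and>
           p2 z - 2 * of_real c * of_real (1 / (c\<^sup>2 - 1)) * l * p1 z
             + of_real (1 / (c\<^sup>2 - 1)) * (l\<^sup>2 + of_real (cos (f z))) * p z = 0) \<and>
      bounded (range p) \<and> (\<exists>z. p z \<noteq> 0)}"

end

theory Submission imports Defs begin

lemma sin_lip: "\<bar>sin (x::real) - sin y\<bar> \<le> \<bar>x - y\<bar>"
proof -
  have "sin x - sin y = 2 * sin ((x - y) / 2) * cos ((x + y) / 2)"
    by (simp add: sin_diff_sin)
  hence "\<bar>sin x - sin y\<bar> = 2 * \<bar>sin ((x - y) / 2)\<bar> * \<bar>cos ((x + y) / 2)\<bar>"
    by (simp add: abs_mult)
  also have "\<dots> \<le> 2 * \<bar>(x - y) / 2\<bar> * 1"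
    by (intro mult_mono abs_sin_x_le_abs_x) auto
  finally show ?thesis by simp
qed

lemma concave_bounded_False:
  fixes f f1 f2 :: "real \<Rightarrow> real"
  assumes d: "\<And>z. (f has_real_derivative f1 z) (at z)"
      "\<And>z. (f1 has_real_derivative f2 z) (at z)"
    and neg: "\<And>z. f2 z < 0" and lb: "\<And>z. f z > m"
  shows False
proof -
  have dec: "f1 y < f1 x" if xy: "x < y" for x y
  proof -
    obtain \<xi> where "x < \<xi>" "\<xi> < y" "f1 y - f1 x = (y - x) * f2 \<xi>"
      using MVT2[where f=f1 and f'=f2, OF xy] d(2) by blast
    moreover have "(y - x) * f2 \<xi> < 0" using xy neg[of \<xi>] by (simp add: mult_pos_neg)
    ultimately show ?thesis by simp
  qed
  have tan: "f z \<le> f z0 + f1 z0 * (z - z0)" for z z0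
  proof (cases z0 z rule: linorder_cases)
    case less
    obtain \<xi> where "z0 < \<xi>" "\<xi> < z" "f z - f z0 = (z - z0) * f1 \<xi>"
      using MVT2[where f=f and f'=f1, OF less] d(1) by blast
    moreover have "(z - z0) * f1 \<xi> \<le> (z - z0) * f1 z0"
      using dec[OF \<open>z0 < \<xi>\<close>] less by (intro mult_left_mono) auto
    ultimately show ?thesis by (simp add: algebra_simps)
  next
    case greater
    obtain \<xi> where "z < \<xi>" "\<xi> < z0" "f z0 - f z = (z0 - z) * f1 \<xi>"
      using MVT2[where f=f and f'=f1, OF greater] d(1) by blast
    moreover have "(z0 - z) * f1 \<xi> \<ge> (z0 - z) * f1 z0"
      using dec[OF \<open>\<xi> < z0\<close>] greater by (intro mult_left_mono) auto
    ultimately show ?thesis by (simp add: algebra_simps)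
  qed simp
  obtain z0 where z0: "f1 z0 \<noteq> 0"
    using dec[of 0 1] by (cases "f1 0 = 0") force+
  define z where "z = z0 - (f z0 - m + 1) / f1 z0"
  have "f1 z0 * (z - z0) = -(f z0 - m + 1)" using z0 by (simp add: z_def)
  with tan[of z z0] lb[of z] show False by simp
qed

lemma ode_unique:
  fixes a z0 :: real and f f1 f2 g g1 g2 :: "real \<Rightarrow> real"
  assumes a: "a \<noteq> 0"
    and df: "\<And>z. (f has_real_derivative f1 z) (at z)" "\<And>z. (f1 has_real_derivative f2 z) (at z)"
      "\<And>z. a * f2 z + sin (f z) = 0"
    and dg: "\<And>z. (g has_real_derivative g1 z) (at z)" "\<And>z. (g1 has_real_derivative g2 z) (at z)"
      "\<And>z. a * g2 z + sin (g z) = 0"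
    and init: "f z0 = g z0" "f1 z0 = g1 z0"
  shows "f z = g z"
proof -
  define w where "w z = (f z - g z)^2 + (f1 z - g1 z)^2" for z
  define w' where "w' z = 2*(f z - g z)*(f1 z - g1 z) + 2*(f1 z - g1 z)*(f2 z - g2 z)" for z
  have dw: "(w has_real_derivative w' z) (at z)" for z
    unfolding w_def w'_def by (auto intro!: derivative_eq_intros df dg simp: algebra_simps)
  define K where "K = 1 + 1 / \<bar>a\<bar>"
  have Kpos: "K > 0" unfolding K_def by (simp add: add_pos_nonneg)
  have wnn: "w z \<ge> 0" for z unfolding w_def by simp
  have w0: "w z0 = 0" unfolding w_def using init by simp
  have bound: "\<bar>w' z\<bar> \<le> K * w z" for z
  proof -
    define u where "u = f z - g z"
    define v where "v = f1 z - g1 z"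
    have e: "f2 z - g2 z = (sin (g z) - sin (f z)) / a"
      using df(3)[of z] dg(3)[of z] a by (simp add: field_simps)
    have e2: "\<bar>f2 z - g2 z\<bar> \<le> \<bar>u\<bar> / \<bar>a\<bar>"
      unfolding e u_def using sin_lip[of "g z" "f z"] a
      by (simp add: abs_minus_commute divide_right_mono)
    have uv: "2 * \<bar>u\<bar> * \<bar>v\<bar> \<le> u^2 + v^2"
    proof -
      have "0 \<le> (\<bar>u\<bar> - \<bar>v\<bar>)^2" by simp
      thus ?thesis by (simp add: power2_eq_square algebra_simps)
    qed
    have "\<bar>w' z\<bar> \<le> 2 * \<bar>u\<bar> * \<bar>v\<bar> + 2 * \<bar>v\<bar> * \<bar>f2 z - g2 z\<bar>"
    proof -
      have "w' z = 2 * u * v + 2 * v * (f2 z - g2 z)" unfolding w'_def u_def v_def by simp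
      also have "\<bar>\<dots>\<bar> \<le> \<bar>2 * u * v\<bar> + \<bar>2 * v * (f2 z - g2 z)\<bar>" by (rule abs_triangle_ineq)
      finally show ?thesis by (simp add: abs_mult)
    qed
    also have "\<dots> \<le> 2 * \<bar>u\<bar> * \<bar>v\<bar> + 2 * \<bar>v\<bar> * (\<bar>u\<bar> / \<bar>a\<bar>)"
      using e2 by (intro add_left_mono mult_left_mono) auto
    also have "\<dots> = K * (2 * \<bar>u\<bar> * \<bar>v\<bar>)" unfolding K_def by (simp add: algebra_simps)
    also have "\<dots> \<le> K * (u^2 + v^2)" using uv Kpos by simp
    finally show ?thesis unfolding w_def u_def v_def .
  qed
  have "w z = 0"
  proof (cases "z0 \<le> z")
    case True
    have "w z * exp (- K * z) \<le> w z0 * exp (- K * z0)"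
    proof (rule DERIV_nonpos_imp_nonincreasing[OF True])
      fix x
      have "((\<lambda>x. w x * exp (- K * x)) has_real_derivative
              (w' x * exp (- K * x) + w x * (exp (- K * x) * (- K)))) (at x)"
        by (auto intro!: derivative_eq_intros dw)
      moreover have "w' x * exp (- K * x) + w x * (exp (- K * x) * (- K)) \<le> 0"
      proof -
        have "w' x - K * w x \<le> 0" using bound[of x] by simp
        hence "(w' x - K * w x) * exp (- K * x) \<le> 0" by (simp add: mult_nonpos_nonneg)
        thus ?thesis by (simp add: algebra_simps)
      qed
      ultimately show "\<exists>y. ((\<lambda>x. w x * exp (- K * x)) has_real_derivative y) (at x) \<and> y \<le> 0"
        by blast
    qed
    hence "w z * exp (- K * z) \<le> 0" using w0 by simp
    thus ?thesis using wnn[of z] by (simp add: mult_le_0_iff)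
  next
    case False
    hence le: "z \<le> z0" by simp
    have "w z * exp (K * z) \<le> w z0 * exp (K * z0)"
    proof (rule DERIV_nonneg_imp_nondecreasing[OF le])
      fix x
      have "((\<lambda>x. w x * exp (K * x)) has_real_derivative
              (w' x * exp (K * x) + w x * (exp (K * x) * K))) (at x)"
        by (auto intro!: derivative_eq_intros dw)
      moreover have "w' x * exp (K * x) + w x * (exp (K * x) * K) \<ge> 0"
      proof -
        have "w' x + K * w x \<ge> 0" using bound[of x] by simp
        hence "(w' x + K * w x) * exp (K * x) \<ge> 0" by simp
        thus ?thesis by (simp add: algebra_simps)
      qed
      ultimately show "\<exists>y. ((\<lambda>x. w x * exp (K * x)) has_real_derivative y) (at x) \<and> y \<ge> 0"
        by blast
    qed
    hence "w z * exp (K * z) \<le> 0" using w0 by simp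
    thus ?thesis using wnn[of z] by (simp add: mult_le_0_iff)
  qed
  thus ?thesis unfolding w_def by (simp add: add_nonneg_eq_0_iff)
qed

lemma ivt_any:
  fixes f :: "real \<Rightarrow> real"
  assumes c: "\<And>z. isCont f z" and "f x \<le> y" "y \<le> f x'"
  shows "\<exists>t. f t = y"
proof (cases "x \<le> x'")
  case True thus ?thesis using IVT[of f x y x'] assms by blast
next
  case False
  hence "x' \<le> x" by simp
  thus ?thesis using IVT2[of f x y x'] assms by blast
qed

lemma hits_pi:
  fixes a :: real and f f1 f2 :: "real \<Rightarrow> real"
  assumes a: "a \<noteq> 0"
    and df: "\<And>z. (f has_real_derivative f1 z) (at z)" "\<And>z. (f1 has_real_derivative f2 z) (at z)"
      "\<And>z. a * f2 z + sin (f z) = 0"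
  shows "\<exists>z0. sin (f z0) = 0"
proof (rule ccontr)
  assume "\<not> ?thesis"
  hence H: "sin (f z) \<noteq> 0" for z by blast
  have cf: "isCont f z" for z using df(1) by (rule DERIV_isCont)
  have csf: "isCont (\<lambda>z. sin (f z)) z" for z by (intro continuous_intros cf)
  define n where "n = \<lfloor>f 0 / pi\<rfloor>"
  have n1: "of_int n * pi \<le> f 0" and n2: "f 0 < (of_int n + 1) * pi"
    unfolding n_def using pi_gt_zero
    by (metis floor_divide_lower, metis floor_divide_upper)
  have sinpi: "sin (of_int k * pi) = 0" for k :: int by (simp add: sin_zero_iff_int2)
  have lo: "of_int n * pi < f z" for z
  proof (rule ccontr)
    assume "\<not> ?thesis"
    then obtain t where "f t = of_int n * pi" using ivt_any[OF cf, of z _ 0] n1 by force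
    thus False using H[of t] sinpi[of n] by simp
  qed
  have hi: "f z < (of_int n + 1) * pi" for z
  proof (rule ccontr)
    assume "\<not> ?thesis"
    then obtain t where "f t = of_int (n+1) * pi" using ivt_any[OF cf, of 0 _ z] n2 by force
    thus False using H[of t] sinpi[of "n+1"] by simp
  qed
  have f2e: "f2 z = - sin (f z) / a" for z using df(3)[of z] a by (simp add: field_simps)
  have same: "sin (f z) > 0 \<longleftrightarrow> sin (f 0) > 0" for z
  proof (rule ccontr)
    assume "\<not> ?thesis"
    then obtain t where "sin (f t) = 0"
      using ivt_any[OF csf, of z 0 0] ivt_any[OF csf, of 0 0 z] H[of z] H[of 0]
      by (metis linorder_neqE_linordered_idom order.strict_implies_order)
    thus False using H by blast
  qed
  have dn: "\<And>z. ((\<lambda>z. - f z) has_real_derivative - f1 z) (at z)"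
           "\<And>z. ((\<lambda>z. - f1 z) has_real_derivative - f2 z) (at z)"
    using df by (auto intro: DERIV_minus)
  consider "f2 = (\<lambda>z. f2 z) \<and> (\<forall>z. f2 z < 0)" | "\<forall>z. f2 z > 0"
  proof (cases "sin (f 0) > 0"; cases "a > 0")
    assume "sin (f 0) > 0" "a > 0"
    hence "\<forall>z. f2 z < 0" using same f2e by (simp add: divide_pos_pos)
    thus thesis using that by blast
  next
    assume "sin (f 0) > 0" "\<not> a > 0"
    hence "\<forall>z. f2 z > 0" using same f2e a by (simp add: divide_pos_neg)
    thus thesis using that by blast
  next
    assume "\<not> sin (f 0) > 0" "a > 0"
    hence "\<forall>z. sin (f z) < 0" using same H by (meson linorder_neqE_linordered_idom)
    hence "\<forall>z. f2 z > 0" using f2e \<open>a > 0\<close> by (simp add: divide_neg_pos)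
    thus thesis using that by blast
  next
    assume "\<not> sin (f 0) > 0" "\<not> a > 0"
    hence "\<forall>z. sin (f z) < 0" using same H by (meson linorder_neqE_linordered_idom)
    hence "\<forall>z. f2 z < 0" using f2e \<open>\<not> a > 0\<close> a by (simp add: divide_neg_neg)
    thus thesis using that by blast
  qed
  thus False
  proof cases
    case 1
    thus False using concave_bounded_False[OF df(1) df(2), of "of_int n * pi"] lo by blast
  next
    case 2
    thus False using concave_bounded_False[OF dn, of "- ((of_int n + 1) * pi)"] hi by force
  qed
qed

lemma reflect_cos:
  fixes a z0 :: real and f f1 f2 :: "real \<Rightarrow> real"
  assumes a: "a \<noteq> 0"
    and df: "\<And>z. (f has_real_derivative f1 z) (at z)" "\<And>z. (f1 has_real_derivative f2 z) (at z)"
      "\<And>z. a * f2 z + sin (f z) = 0"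
    and s0: "sin (f z0) = 0"
  shows "cos (f (2*z0 - z)) = cos (f z)"
proof -
  define y where "y = f z0"
  have s2: "sin (2*y) = 0" and c2: "cos (2*y) = 1"
    using s0 unfolding y_def by (simp_all add: sin_double cos_double_sin)
  define g where "g z = 2*y - f (2*z0 - z)" for z
  define g1 where "g1 z = f1 (2*z0 - z)" for z
  define g2 where "g2 z = - f2 (2*z0 - z)" for z
  have dg1: "(g has_real_derivative g1 z) (at z)" for z
  proof -
    have "((\<lambda>z. f (2*z0 - z)) has_real_derivative f1 (2*z0 - z) * (-1)) (at z)"
      by (rule DERIV_chain2[OF df(1)]) (auto intro!: derivative_eq_intros)
    thus ?thesis unfolding g_def g1_def by (auto intro!: derivative_eq_intros)
  qed
  have dg2: "(g1 has_real_derivative g2 z) (at z)" for z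
  proof -
    have "((\<lambda>z. f1 (2*z0 - z)) has_real_derivative f2 (2*z0 - z) * (-1)) (at z)"
      by (rule DERIV_chain2[OF df(2)]) (auto intro!: derivative_eq_intros)
    thus ?thesis unfolding g1_def g2_def by simp
  qed
  have eq: "a * g2 z + sin (g z) = 0" for z
  proof -
    have "sin (g z) = sin (2*y) * cos (f (2*z0 - z)) - cos (2*y) * sin (f (2*z0 - z))"
      unfolding g_def by (rule sin_diff)
    also have "\<dots> = - sin (f (2*z0 - z))" using s2 c2 by simp
    finally show ?thesis using df(3)[of "2*z0 - z"] unfolding g2_def by simp
  qed
  have "f w = g w" for w
  proof -
    have i1: "f z0 = g z0" by (simp add: g_def y_def)
    have i2: "f1 z0 = g1 z0" by (simp add: g1_def)
    show ?thesis using ode_unique[OF a df(1) df(2) df(3) dg1 dg2 eq i1 i2] .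
  qed
  hence "f (2*z0 - z) = 2*y - f z" using g_def[of z] by simp
  hence "cos (f (2*z0 - z)) = cos (2*y) * cos (f z) + sin (2*y) * sin (f z)"
    by (simp add: cos_diff)
  thus ?thesis using s2 c2 by simp
qed

lemma inv_image_eq:
  assumes "\<And>l. l \<in> S \<Longrightarrow> g l \<in> S" "\<And>l. g (g l) = l"
  shows "S = g ` S"
proof
  show "g ` S \<subseteq> S" using assms(1) by blast
  show "S \<subseteq> g ` S"
  proof
    fix l assume "l \<in> S"
    hence "g l \<in> S" by (rule assms(1))
    thus "l \<in> g ` S" using assms(2)[of l] by (metis image_eqI)
  qed
qed

lemma specP_cnj:
  assumes "l \<in> specP c f" shows "cnj l \<in> specP c f"
proof -
  obtain p p1 p2 :: "real \<Rightarrow> complex" where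
    H: "\<forall>z. (p has_vector_derivative p1 z) (at z) \<and>
           (p1 has_vector_derivative p2 z) (at z) \<and>
           p2 z - 2 * of_real c * of_real (1 / (c\<^sup>2 - 1)) * l * p1 z
             + of_real (1 / (c\<^sup>2 - 1)) * (l\<^sup>2 + of_real (cos (f z))) * p z = 0"
    and b: "bounded (range p)" and nz: "\<exists>z. p z \<noteq> 0"
    using assms unfolding specP_def by blast
  let ?q = "\<lambda>z. cnj (p z)" and ?q1 = "\<lambda>z. cnj (p1 z)" and ?q2 = "\<lambda>z. cnj (p2 z)"
  have "\<forall>z. (?q has_vector_derivative ?q1 z) (at z) \<and>
           (?q1 has_vector_derivative ?q2 z) (at z) \<and>
           ?q2 z - 2 * of_real c * of_real (1 / (c\<^sup>2 - 1)) * cnj l * ?q1 z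
             + of_real (1 / (c\<^sup>2 - 1)) * ((cnj l)\<^sup>2 + of_real (cos (f z))) * ?q z = 0"
  proof
    fix z
    from H have h: "(p has_vector_derivative p1 z) (at z)" "(p1 has_vector_derivative p2 z) (at z)"
      "p2 z - 2 * of_real c * of_real (1 / (c\<^sup>2 - 1)) * l * p1 z
             + of_real (1 / (c\<^sup>2 - 1)) * (l\<^sup>2 + of_real (cos (f z))) * p z = 0" by auto
    have "cnj (p2 z - 2 * of_real c * of_real (1 / (c\<^sup>2 - 1)) * l * p1 z
             + of_real (1 / (c\<^sup>2 - 1)) * (l\<^sup>2 + of_real (cos (f z))) * p z) = 0"
      using h(3) by simp
    hence "?q2 z - 2 * of_real c * of_real (1 / (c\<^sup>2 - 1)) * cnj l * ?q1 z
             + of_real (1 / (c\<^sup>2 - 1)) * ((cnj l)\<^sup>2 + of_real (cos (f z))) * ?q z = 0"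
      by (simp only: complex_cnj_add complex_cnj_diff complex_cnj_mult complex_cnj_complex_of_real
           complex_cnj_power complex_cnj_numeral)
    thus "(?q has_vector_derivative ?q1 z) (at z) \<and>
           (?q1 has_vector_derivative ?q2 z) (at z) \<and>
           ?q2 z - 2 * of_real c * of_real (1 / (c\<^sup>2 - 1)) * cnj l * ?q1 z
             + of_real (1 / (c\<^sup>2 - 1)) * ((cnj l)\<^sup>2 + of_real (cos (f z))) * ?q z = 0"
      using h(1,2) by (auto intro: has_vector_derivative_cnj)
  qed
  moreover have "bounded (range ?q)"
  proof -
    obtain B where "\<forall>x\<in>range p. norm x \<le> B" using b by (auto simp: bounded_iff)
    hence "\<forall>x\<in>range ?q. norm x \<le> B" by auto
    thus ?thesis by (auto simp: bounded_iff)
  qed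
  moreover have "\<exists>z. ?q z \<noteq> 0" using nz by simp
  ultimately show ?thesis unfolding specP_def mem_Collect_eq
    by - (rule exI[of _ ?q], rule exI[of _ ?q1], rule exI[of _ ?q2], blast)
qed

lemma specP_neg:
  assumes "l \<in> specP c f" and refl: "\<And>z. cos (f (2*z0 - z)) = cos (f z)"
  shows "- l \<in> specP c f"
proof -
  obtain p p1 p2 :: "real \<Rightarrow> complex" where
    H: "\<forall>z. (p has_vector_derivative p1 z) (at z) \<and>
           (p1 has_vector_derivative p2 z) (at z) \<and>
           p2 z - 2 * of_real c * of_real (1 / (c\<^sup>2 - 1)) * l * p1 z
             + of_real (1 / (c\<^sup>2 - 1)) * (l\<^sup>2 + of_real (cos (f z))) * p z = 0"
    and b: "bounded (range p)" and nz: "\<exists>z. p z \<noteq> 0"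
    using assms unfolding specP_def by blast
  let ?q = "\<lambda>z. p (2*z0 - z)" and ?q1 = "\<lambda>z. - p1 (2*z0 - z)" and ?q2 = "\<lambda>z. p2 (2*z0 - z)"
  have rd: "((\<lambda>z::real. 2*z0 - z) has_vector_derivative (-1)) (at z)" for z
    by (auto intro!: derivative_eq_intros simp: has_real_derivative_iff_has_vector_derivative[symmetric])
  have "\<forall>z. (?q has_vector_derivative ?q1 z) (at z) \<and>
           (?q1 has_vector_derivative ?q2 z) (at z) \<and>
           ?q2 z - 2 * of_real c * of_real (1 / (c\<^sup>2 - 1)) * (- l) * ?q1 z
             + of_real (1 / (c\<^sup>2 - 1)) * ((- l)\<^sup>2 + of_real (cos (f z))) * ?q z = 0"
  proof
    fix z
    define w where "w = 2*z0 - z"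
    from H have h: "(p has_vector_derivative p1 w) (at w)" "(p1 has_vector_derivative p2 w) (at w)"
      "p2 w - 2 * of_real c * of_real (1 / (c\<^sup>2 - 1)) * l * p1 w
             + of_real (1 / (c\<^sup>2 - 1)) * (l\<^sup>2 + of_real (cos (f w))) * p w = 0" by auto
    have d1: "(?q has_vector_derivative ?q1 z) (at z)"
      using vector_diff_chain_at[OF rd, of p "p1 w"] h(1) unfolding w_def by (simp add: o_def)
    have d2': "((\<lambda>z. p1 (2*z0 - z)) has_vector_derivative - p2 w) (at z)"
      using vector_diff_chain_at[OF rd, of p1 "p2 w"] h(2) unfolding w_def by (simp add: o_def)
    have d2: "(?q1 has_vector_derivative ?q2 z) (at z)"
      using has_vector_derivative_minus[OF d2'] unfolding w_def by simp
    have cz: "cos (f z) = cos (f w)" using refl[of z] unfolding w_def by simp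
    have "?q2 z - 2 * of_real c * of_real (1 / (c\<^sup>2 - 1)) * (- l) * ?q1 z
             + of_real (1 / (c\<^sup>2 - 1)) * ((- l)\<^sup>2 + of_real (cos (f z))) * ?q z = 0"
      using h(3) cz unfolding w_def by simp
    thus "(?q has_vector_derivative ?q1 z) (at z) \<and>
           (?q1 has_vector_derivative ?q2 z) (at z) \<and>
           ?q2 z - 2 * of_real c * of_real (1 / (c\<^sup>2 - 1)) * (- l) * ?q1 z
             + of_real (1 / (c\<^sup>2 - 1)) * ((- l)\<^sup>2 + of_real (cos (f z))) * ?q z = 0"
      using d1 d2 by blast
  qed
  moreover have "bounded (range ?q)"
    by (rule bounded_subset[OF b]) auto
  moreover have "\<exists>z. ?q z \<noteq> 0"
  proof -
    obtain z where "p z \<noteq> 0" using nz by blast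
    hence "?q (2*z0 - z) \<noteq> 0" by simp
    thus ?thesis by blast
  qed
  ultimately show ?thesis unfolding specP_def mem_Collect_eq
    by - (rule exI[of _ ?q], rule exI[of _ ?q1], rule exI[of _ ?q2], blast)
qed

theorem proposition1p7:
  fixes c :: real and f :: "real \<Rightarrow> real"
  assumes "periodic_tw c f"
  shows "specP c f = cnj ` specP c f \<and> specP c f = uminus ` specP c f
         \<and> specP c f = (\<lambda>l. - cnj l) ` specP c f"
proof -
  have tw: "traveling_wave c f" using assms
    unfolding periodic_tw_def librational_tw_def rotational_tw_def by blast
  then obtain f1 f2 where a: "c\<^sup>2 - 1 \<noteq> 0" and
    D: "\<forall>z. (f has_real_derivative f1 z) (at z) \<and>
                  (f1 has_real_derivative f2 z) (at z) \<and>
                  (c\<^sup>2 - 1) * f2 z + sin (f z) = 0"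
    unfolding traveling_wave_def by auto
  have df: "\<And>z. (f has_real_derivative f1 z) (at z)" "\<And>z. (f1 has_real_derivative f2 z) (at z)"
      "\<And>z. (c\<^sup>2 - 1) * f2 z + sin (f z) = 0" using D by auto
  obtain z0 where "sin (f z0) = 0" using hits_pi[OF a df] by blast
  hence refl: "\<And>z. cos (f (2*z0 - z)) = cos (f z)" using reflect_cos[OF a df] by blast
  have C: "\<And>l. l \<in> specP c f \<Longrightarrow> cnj l \<in> specP c f" by (rule specP_cnj)
  have N: "\<And>l. l \<in> specP c f \<Longrightarrow> - l \<in> specP c f" using specP_neg refl by blast
  show ?thesis
  proof (intro conjI)
    show "specP c f = cnj ` specP c f" by (rule inv_image_eq) (auto intro: C)
    show "specP c f = uminus ` specP c f" by (rule inv_image_eq) (auto intro: N)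
    show "specP c f = (\<lambda>l. - cnj l) ` specP c f" by (rule inv_image_eq) (auto intro: C N)
  qed
qed

end
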